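(* There exists an instance with two agents $N=\{1,2\}$ and a finite item set $A$ with no externalities (i.e., $V_i(j,a)=0$ for all $a\in A$ and $i\ne j$) together with a complete allocation that is envy-free but does not satisfy PROP-Max.
   Context: Setting: agents $N=\{1,\dots,n\}$, finite item set $A$; a complete allocation $\pi$ partitions $A$ into bundles $\pi_1,\dots,\pi_n$; $\pi(a)$ is the agent receiving $a$; $V_i(j,a)\in\mathbb{R}$ is agent $i$'s value when item $a$ goes to agent $j$; $V_i(\pi)=\sum_{a\in A}V_i(\pi(a),a)$. $\pi^{i\leftrightarrow j}$ is $\pi$ with bundles of $i$ and $j$ swapped. $\pi$ is envy-free (EF) if there are no agents $i,j$ with $V_i(\pi^{i\leftrightarrow j})>V_i(\pi)$. With $V_i^{max}(a)=\max_{j\in N}V_i(j,a)$, $\pi$ satisfies PROP-Max if $V_i(\pi)\ge\frac1n\sum_{a\in A}V_i^{max}(a)$ for all $i\in N$. *)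

theory Defs
  imports Complex_Main
begin

text \<open>An allocation is a map \<sigma> from items to agents
(\<sigma> a is the agent receiving a). V i j a is agent i's value when item a goes to agent j.\<close>

definition complete_alloc :: "nat set \<Rightarrow> nat set \<Rightarrow> (nat \<Rightarrow> nat) \<Rightarrow> bool" where
  "complete_alloc N A \<sigma> \<longleftrightarrow> (\<forall>a\<in>A. \<sigma> a \<in> N)"

definition alloc_value :: "nat set \<Rightarrow> (nat \<Rightarrow> nat \<Rightarrow> nat \<Rightarrow> real) \<Rightarrow> nat \<Rightarrow> (nat \<Rightarrow> nat) \<Rightarrow> real" where
  "alloc_value A V i \<sigma> = (\<Sum>a\<in>A. V i (\<sigma> a) a)"

definition swap_bundles :: "(nat \<Rightarrow> nat) \<Rightarrow> nat \<Rightarrow> nat \<Rightarrow> (nat \<Rightarrow> nat)" where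
  "swap_bundles \<sigma> i j = (\<lambda>a. if \<sigma> a = i then j else if \<sigma> a = j then i else \<sigma> a)"

definition envy_free :: "nat set \<Rightarrow> nat set \<Rightarrow> (nat \<Rightarrow> nat \<Rightarrow> nat \<Rightarrow> real) \<Rightarrow> (nat \<Rightarrow> nat) \<Rightarrow> bool" where
  "envy_free N A V \<sigma> \<longleftrightarrow>
     \<not> (\<exists>i\<in>N. \<exists>j\<in>N. alloc_value A V i (swap_bundles \<sigma> i j) > alloc_value A V i \<sigma>)"

definition Vmax :: "nat set \<Rightarrow> (nat \<Rightarrow> nat \<Rightarrow> nat \<Rightarrow> real) \<Rightarrow> nat \<Rightarrow> nat \<Rightarrow> real" where
  "Vmax N V i a = Max ((\<lambda>j. V i j a) ` N)"

definition prop_max :: "nat set \<Rightarrow> nat set \<Rightarrow> (nat \<Rightarrow> nat \<Rightarrow> nat \<Rightarrow> real) \<Rightarrow> (nat \<Rightarrow> nat) \<Rightarrow> bool" where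
  "prop_max N A V \<sigma> \<longleftrightarrow>
     (\<forall>i\<in>N. alloc_value A V i \<sigma> \<ge> (1 / real (card N)) * (\<Sum>a\<in>A. Vmax N V i a))"

end

theory Submission
  imports Defs
begin

theorem proposition1:
  shows "\<exists>(A::nat set) (V::nat \<Rightarrow> nat \<Rightarrow> nat \<Rightarrow> real) (\<sigma>::nat \<Rightarrow> nat).
           finite A \<and>
           (\<forall>i\<in>{1,2}. \<forall>j\<in>{1,2}. \<forall>a\<in>A. i \<noteq> j \<longrightarrow> V i j a = 0) \<and>
           complete_alloc {1,2} A \<sigma> \<and>
           envy_free {1,2} A V \<sigma> \<and>
           \<not> prop_max {1,2} A V \<sigma>"
proof (intro exI conjI)
  let ?A = "{0::nat,1,2}"
  let ?V = "\<lambda>i j a::nat. if i = j then (if i = 1 then (if a = 0 then 1 else if a = 1 then 2 else -2)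
             else (if a = 1 then 1 else 0)) else (0::real)"
  let ?s = "\<lambda>a::nat. if a = 0 then 1 else (2::nat)"
  show "finite ?A" by simp
  show "\<forall>i\<in>{1,2}. \<forall>j\<in>{1,2}. \<forall>a\<in>?A. i \<noteq> j \<longrightarrow> ?V i j a = 0" by simp
  show "complete_alloc {1,2} ?A ?s" by (simp add: complete_alloc_def)
  show "envy_free {1,2} ?A ?V ?s"
    by (simp add: envy_free_def alloc_value_def swap_bundles_def)
  show "\<not> prop_max {1,2} ?A ?V ?s"
    by (simp add: prop_max_def alloc_value_def Vmax_def)
qed

end
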